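(* Let $B\ge1$, let $X$ be a random variable with a unimodal distribution on $G=\{0,\frac1B,\frac2B,\dots,1\}$, let $t\in G$ and $\eta:=\mathbb{E}(X)$. If $\eta\le1/3$, then \[\mathbb{P}(X\ge t)\le\begin{cases}\dfrac{2\eta-t+\frac1B}{t+\frac1B}&\text{if } t\in\bigl(\eta,\min(\tfrac32\eta+\tfrac1{2B},2\eta)\bigr],\\[2mm]\dfrac{\eta}{2t-\frac1B}&\text{if } t\in\bigl(\min(\tfrac32\eta+\tfrac1{2B},2\eta),\tfrac12\bigr],\\[2mm]\dfrac{2\eta(1-t+\frac1B)}{1+\frac1B}&\text{if } t\in(\tfrac12,1].\end{cases}\] Let $d:=-2(\eta-\tfrac12)(6\eta+1)+\frac{2-4\eta}{B}+\frac{(4\eta-1)^2}{B^2}$. If $\eta>1/3$ and $d>0$, then \[\mathbb{P}(X\ge t)\le\begin{cases}\dfrac{2\eta-t+\frac1B}{t+\frac1B}&\text{if } t\in\bigl(\eta,\tfrac12+\tfrac1{4\eta}(1+\tfrac1B-d^{1/2})\bigr],\\[2mm]\dfrac{2\eta(1-t+\frac1B)}{1+\frac1B}&\text{if } t\in\bigl(\tfrac12+\tfrac1{4\eta}(1+\tfrac1B-d^{1/2}),1\bigr].\end{cases}\] Finally, if $\eta>1/3$ and $d\le0$, then $\mathbb{P}(X\ge t)\le\dfrac{2\eta-t+\frac1B}{t+\frac1B}$.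
   Context: A distribution on $G=\{0,\frac1B,\dots,1\}$ with probability mass function $f$ (write $f_i=f(i/B)$) is unimodal if there is $m\in\{0,\dots,B\}$ with $f_0\le f_1\le\dots\le f_m$ and $f_m\ge f_{m+1}\ge\dots\ge f_B$. *)

theory Defs
  imports Complex_Main
begin

text \<open>A distribution on G = {0, 1/B, ..., 1} is given by its probability mass
  function f, written f i = f(i/B) for i = 0..B.\<close>

definition is_pmf_on_grid :: "nat \<Rightarrow> (nat \<Rightarrow> real) \<Rightarrow> bool" where
  "is_pmf_on_grid B f \<longleftrightarrow> (\<forall>i\<le>B. 0 \<le> f i) \<and> (\<Sum>i\<le>B. f i) = 1"

definition unimodal_grid :: "nat \<Rightarrow> (nat \<Rightarrow> real) \<Rightarrow> bool" where
  "unimodal_grid B f \<longleftrightarrow> (\<exists>m\<le>B. (\<forall>i j. i \<le> j \<and> j \<le> m \<longrightarrow> f i \<le> f j)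
                                   \<and> (\<forall>i j. m \<le> i \<and> i \<le> j \<and> j \<le> B \<longrightarrow> f j \<le> f i))"

definition grid_mean :: "nat \<Rightarrow> (nat \<Rightarrow> real) \<Rightarrow> real" where
  "grid_mean B f = (\<Sum>i\<le>B. (real i / real B) * f i)"

definition grid_tail :: "nat \<Rightarrow> (nat \<Rightarrow> real) \<Rightarrow> nat \<Rightarrow> real" where
  "grid_tail B f k = (\<Sum>i\<in>{k..B}. f i)"

end

theory Submission
  imports Defs
begin



lemma layer_aux:
  fixes w :: "nat \<Rightarrow> real" and m N :: nat
  assumes W: "\<And>a b. a \<le> m \<Longrightarrow> m \<le> b \<Longrightarrow> b \<le> N \<Longrightarrow> 0 \<le> (\<Sum>i=a..b. w i)"
  shows "a \<le> m \<Longrightarrow> m \<le> b \<Longrightarrow> b \<le> N \<Longrightarrow> (\<forall>i\<in>{a..b}. 0 \<le> g i)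
    \<Longrightarrow> (\<forall>i j. a \<le> i \<longrightarrow> i \<le> j \<longrightarrow> j \<le> m \<longrightarrow> g i \<le> g j)
    \<Longrightarrow> (\<forall>i j. m \<le> i \<longrightarrow> i \<le> j \<longrightarrow> j \<le> b \<longrightarrow> g j \<le> g i)
    \<Longrightarrow> 0 \<le> (\<Sum>i=a..b. w i * g i)"
proof (induction "b - a" arbitrary: a b g rule: less_induct)
  case less
  note am = less.prems(1) and mb = less.prems(2) and bN = less.prems(3)
    and gpos = less.prems(4) and up = less.prems(5) and down = less.prems(6)
  define c where "c = min (g a) (g b)"
  define h where "h i = g i - c" for i
  have ga: "g a \<le> g i" if "a \<le> i" "i \<le> m" for i using up that by blast
  have gb: "g b \<le> g i" if "m \<le> i" "i \<le> b" for i using down that by blast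
  have hpos: "\<forall>i\<in>{a..b}. 0 \<le> h i"
  proof
    fix i assume i: "i \<in> {a..b}"
    show "0 \<le> h i"
    proof (cases "i \<le> m")
      case True then show ?thesis using ga[of i] i unfolding h_def c_def by auto
    next
      case False then show ?thesis using gb[of i] i unfolding h_def c_def by auto
    qed
  qed
  have hup: "\<forall>i j. a \<le> i \<longrightarrow> i \<le> j \<longrightarrow> j \<le> m \<longrightarrow> h i \<le> h j"
    using up unfolding h_def by auto
  have hdown: "\<forall>i j. m \<le> i \<longrightarrow> i \<le> j \<longrightarrow> j \<le> b \<longrightarrow> h j \<le> h i"
    using down unfolding h_def by auto
  have c0: "0 \<le> c" using gpos am mb unfolding c_def by auto
  have split: "(\<Sum>i=a..b. w i * g i) = c * (\<Sum>i=a..b. w i) + (\<Sum>i=a..b. w i * h i)"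
    unfolding h_def by (simp add: algebra_simps sum.distrib sum_distrib_left sum_subtractf)
  have first: "0 \<le> c * (\<Sum>i=a..b. w i)" using c0 W[OF am mb bN] by simp
  have second: "0 \<le> (\<Sum>i=a..b. w i * h i)"
  proof (cases "g a \<le> g b")
    case True
    then have ha: "h a = 0" unfolding h_def c_def by simp
    show ?thesis
    proof (cases "a < m")
      case True
      have "(\<Sum>i=a..b. w i * h i) = w a * h a + (\<Sum>i=Suc a..b. w i * h i)"
        using am mb by (simp add: sum.atLeast_Suc_atMost)
      also have "\<dots> = (\<Sum>i=Suc a..b. w i * h i)" using ha by simp
      also have "0 \<le> \<dots>"
        apply (rule less.hyps[of b "Suc a" h])
        using True mb bN hpos hup hdown by auto
      finally show ?thesis .
    next
      case False
      then have "a = m" using am by simp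
      have "h i = 0" if "i \<in> {a..b}" for i
      proof -
        have "h i \<le> h m" using hdown that \<open>a = m\<close> by auto
        moreover have "0 \<le> h i" using hpos that by auto
        ultimately show ?thesis using ha \<open>a = m\<close> by simp
      qed
      then show ?thesis by simp
    qed
  next
    case False
    then have hb: "h b = 0" unfolding h_def c_def by simp
    show ?thesis
    proof (cases "m < b")
      case True
      then obtain b' where b': "b = Suc b'" by (cases b) auto
      have "(\<Sum>i=a..b. w i * h i) = (\<Sum>i=a..b'. w i * h i) + w b * h b"
        using am True b' by simp
      also have "\<dots> = (\<Sum>i=a..b'. w i * h i)" using hb by simp
      also have "0 \<le> \<dots>"
        apply (rule less.hyps[of b' a h])
        using True am bN hpos hup hdown b' by auto
      finally show ?thesis .
    next
      case False
      then have "b = m" using mb by simp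
      have "h i = 0" if "i \<in> {a..b}" for i
      proof -
        have "h i \<le> h m" using hup that \<open>b = m\<close> by auto
        moreover have "0 \<le> h i" using hpos that by auto
        ultimately show ?thesis using hb \<open>b = m\<close> by simp
      qed
      then show ?thesis by simp
    qed
  qed
  show ?case using split first second by simp
qed



lemma gauss_ivl:
  fixes a b :: nat
  assumes "a \<le> b"
  shows "2 * (\<Sum>i=a..b. real i) = real (b - a + 1) * (real a + real b)"
  using assms
proof (induction b)
  case 0 then show ?case by simp
next
  case (Suc b)
  show ?case
  proof (cases "a = Suc b")
    case True then show ?thesis by simp
  next
    case False
    then have "a \<le> b" using Suc.prems by simp
    then have "2 * (\<Sum>i=a..Suc b. real i) = real (b - a + 1) * (real a + real b) + 2 * real (Suc b)"
      using Suc.IH by (simp add: algebra_simps)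
    also have "\<dots> = real (Suc b - a + 1) * (real a + real (Suc b))"
      using \<open>a \<le> b\<close> by (simp add: of_nat_diff algebra_simps)
    finally show ?thesis .
  qed
qed

lemma count_ivl:
  fixes a b k :: nat
  assumes "a \<le> k"
  shows "(\<Sum>i=a..b. (if k \<le> i then 1 else 0 :: real)) = (if k \<le> b then real (b + 1 - k) else 0)"
  using assms
proof (induction b)
  case 0 then show ?case by auto
next
  case (Suc b)
  show ?case
  proof (cases "Suc b < a")
    case True then show ?thesis using Suc.prems by simp
  next
    case False
    then have "(\<Sum>i=a..Suc b. (if k \<le> i then 1 else 0 :: real)) =
       (if k \<le> b then real (b + 1 - k) else 0) + (if k \<le> Suc b then 1 else 0)"
      using Suc by simp
    also have "\<dots> = (if k \<le> Suc b then real (Suc b + 1 - k) else 0)"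
      by (auto simp: of_nat_diff le_Suc_eq)
    finally show ?thesis .
  qed
qed



lemma caseB:
  fixes B k m :: nat and f :: "nat \<Rightarrow> real"
  assumes f0: "\<And>i. i \<le> B \<Longrightarrow> 0 \<le> f i" and s1: "(\<Sum>i\<le>B. f i) = 1"
    and mB: "m \<le> B" and mk: "m + 2 \<le> k" and kB: "k \<le> B"
    and up: "\<forall>i j. i \<le> j \<and> j \<le> m \<longrightarrow> f i \<le> f j"
    and down: "\<forall>i j. m \<le> i \<and> i \<le> j \<and> j \<le> B \<longrightarrow> f j \<le> f i"
  defines "M \<equiv> (\<Sum>i\<le>B. real i * f i)" and "P \<equiv> (\<Sum>i\<in>{k..B}. f i)"
  shows "\<exists>b. k \<le> b \<and> b \<le> B \<and>
     ((2 * M \<le> real b \<and> P \<le> 2 * M * (real b - real k + 1) / (real b * (real b + 1)))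
      \<or> (real b \<le> 2 * M \<and> (real k + 1) * P \<le> 2 * M - real k + 1))"
proof -
  define g where "g b = (real b - real k + 1) / ((real b + 1) * (real b - real m))" for b :: nat
  have fin: "finite (g ` {k..B})" "g ` {k..B} \<noteq> {}" using kB by auto
  obtain b0 where b0: "b0 \<in> {k..B}" "g b0 = Max (g ` {k..B})"
    using Max_in[OF fin] by auto
  have gmax: "g b \<le> g b0" if "b \<in> {k..B}" for b
    using b0(2) Max_ge[OF fin(1)] that by auto
  define \<sigma> where "\<sigma> = 2 * g b0"
  have gpos: "0 \<le> g b" if "k \<le> b" for b
    unfolding g_def using that mk by (auto intro!: divide_nonneg_pos)
  have \<sigma>0: "0 \<le> \<sigma>" using gpos[of b0] b0 unfolding \<sigma>_def by auto
  define w where "w i = \<sigma> * (real i - real m / 2) - (if k \<le> i then 1 else 0)" for i :: nat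
  have W: "0 \<le> (\<Sum>i=a..b. w i)" if ab: "a \<le> m" "m \<le> b" "b \<le> B" for a b
  proof -
    have cst: "(\<Sum>i=a..b. \<sigma> * (real m / 2)) = real (b - a + 1) * (\<sigma> * (real m / 2))"
      using ab by (simp add: Suc_diff_le)
    have "(\<Sum>i=a..b. w i) = (\<Sum>i=a..b. \<sigma> * real i) - (\<Sum>i=a..b. \<sigma> * (real m / 2))
        - (\<Sum>i=a..b. (if k \<le> i then 1 else 0 :: real))"
      unfolding w_def by (simp only: right_diff_distrib sum_subtractf)
    also have "\<dots> = \<sigma> * ((\<Sum>i=a..b. real i) - real (b - a + 1) * (real m / 2))
        - (\<Sum>i=a..b. (if k \<le> i then 1 else 0 :: real))"
      unfolding cst by (simp add: sum_distrib_left algebra_simps)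
    also have "\<dots> = \<sigma> * (real (b - a + 1) * (real a + real b - real m) / 2)
        - (if k \<le> b then real (b + 1 - k) else 0)"
    proof -
      define n where "n = real (b - a + 1)"
      have S: "(\<Sum>i=a..b. real i) = n * (real a + real b) / 2"
        using gauss_ivl[of a b] ab unfolding n_def by simp
      have Cn: "(\<Sum>i=a..b. (if k \<le> i then 1 else 0 :: real)) = (if k \<le> b then real (b + 1 - k) else 0)"
        using count_ivl[of a k b] ab mk by simp
      show ?thesis unfolding S Cn n_def[symmetric] by (simp add: field_simps)
    qed
    also have "0 \<le> \<dots>"
    proof (cases "k \<le> b")
      case False
      then show ?thesis using \<sigma>0 ab by simp
    next
      case True
      have ge: "(real b + 1) * (real b - real m) \<le> real (b - a + 1) * (real a + real b - real m)"
      proof -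
        have "real (b - a + 1) * (real a + real b - real m) - (real b + 1) * (real b - real m)
              = real a * (real m + 1 - real a)"
          using ab by (simp add: of_nat_diff algebra_simps)
        moreover have "0 \<le> real a * (real m + 1 - real a)" using ab by simp
        ultimately show ?thesis by linarith
      qed
      have pos: "0 < (real b + 1) * (real b - real m)" using True mk by simp
      have "real (b + 1 - k) = g b * ((real b + 1) * (real b - real m))"
        unfolding g_def using pos True mk by (simp add: of_nat_diff)
      also have "\<dots> \<le> g b0 * ((real b + 1) * (real b - real m))"
        using gmax[of b] True ab pos by (intro mult_right_mono) auto
      also have "\<dots> \<le> g b0 * (real (b - a + 1) * (real a + real b - real m))"
        using ge gpos[of b0] b0 by (intro mult_left_mono) auto
      finally show ?thesis using True unfolding \<sigma>_def by simp
    qed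
    finally show ?thesis .
  qed
  have main0: "0 \<le> (\<Sum>i=0..B. w i * f i)"
    apply (rule layer_aux[where m=m and N=B])
    using W up down f0 mB by auto
  have "(\<Sum>i=0..B. w i * f i) = \<sigma> * (M - real m / 2) - P"
  proof -
    have "(\<Sum>i=0..B. w i * f i) = \<sigma> * (\<Sum>i\<le>B. real i * f i) - \<sigma> * (real m / 2) * (\<Sum>i\<le>B. f i)
          - (\<Sum>i\<le>B. (if k \<le> i then f i else 0))"
    proof -
      have pt: "w i * f i = \<sigma> * (real i * f i) - (\<sigma> * (real m / 2)) * f i - (if k \<le> i then f i else 0)" for i
        by (simp add: w_def algebra_simps)
      show ?thesis unfolding atLeast0AtMost pt by (simp only: sum_subtractf sum_distrib_left)
    qed
    also have "(\<Sum>i\<le>B. (if k \<le> i then f i else 0)) = P"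
    proof -
      have "(\<Sum>i\<le>B. (if k \<le> i then f i else 0)) = (\<Sum>i\<in>{..B} \<inter> {i. k \<le> i}. f i)"
        by (simp add: sum.inter_restrict)
      also have "{..B} \<inter> {i. k \<le> i} = {k..B}" by auto
      finally show ?thesis unfolding P_def .
    qed
    finally show ?thesis using s1 unfolding M_def by (simp add: right_diff_distrib)
  qed
  with main0 have key: "P \<le> \<sigma> * (M - real m / 2)" by simp
  define bb where "bb = real b0"
  have bbk: "real k \<le> bb" "bb \<le> real B" using b0 unfolding bb_def by auto
  have den: "0 < (bb + 1) * (bb - real m)" using bbk mk by simp
  have key2: "P \<le> (bb - real k + 1) * (2 * M - real m) / ((bb + 1) * (bb - real m))"
  proof -
    have "\<sigma> * (M - real m / 2) = (bb - real k + 1) * (2 * M - real m) / ((bb + 1) * (bb - real m))"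
      unfolding \<sigma>_def g_def bb_def[symmetric] using den by (simp add: field_simps)
    then show ?thesis using key by simp
  qed
  have y0: "0 \<le> bb - real k + 1" using bbk by simp
  show ?thesis
  proof (cases "2 * M \<le> bb")
    case True
    have "(bb - real k + 1) * (2 * M - real m) / ((bb + 1) * (bb - real m))
        \<le> 2 * M * (bb - real k + 1) / (bb * (bb + 1))"
    proof -
      have b1: "0 < bb" using bbk mk by simp
      have "(2 * M - real m) * bb \<le> 2 * M * (bb - real m)"
      proof -
        have "(2 * M) * real m \<le> bb * real m" using True by (intro mult_right_mono) auto
        then show ?thesis by (simp add: algebra_simps)
      qed
      then have "(2 * M - real m) / (bb - real m) \<le> 2 * M / bb"
        using b1 bbk mk by (simp add: divide_simps)
      then have "(bb - real k + 1) / (bb + 1) * ((2 * M - real m) / (bb - real m))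
          \<le> (bb - real k + 1) / (bb + 1) * (2 * M / bb)"
        using y0 b1 by (intro mult_left_mono) auto
      then show ?thesis by (simp add: field_simps)
    qed
    then show ?thesis using key2 True b0 unfolding bb_def by (intro exI[of _ b0]) auto
  next
    case False
    define X where "X = 2 * M"
    define C where "C = (bb + 1) * (bb - real m) - (bb - real k + 1) * (real k + 1)"
    have C0: "0 \<le> C"
    proof -
      have "(bb + 1) * (bb - real k + 2) \<le> (bb + 1) * (bb - real m)"
        using mk bbk by (intro mult_left_mono) auto
      moreover have "(bb - real k + 1) * (real k + 1) \<le> (bb + 1) * (bb - real k + 2)"
      proof -
        have "(bb + 1) * (bb - real k + 2) - (bb - real k + 1) * (real k + 1)
             = (bb + 1) + (bb - real k + 1) * (bb - real k)"
          by (simp add: algebra_simps)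
        moreover have "0 \<le> (bb - real k + 1) * (bb - real k)" using bbk by simp
        ultimately show ?thesis using bbk by linarith
      qed
      ultimately show ?thesis unfolding C_def by linarith
    qed
    have ident: "(X - real k + 1) * ((bb + 1) * (bb - real m)) - (bb - real k + 1) * (X - real m) * (real k + 1)
        = (X - bb) * C + (bb - real k + 1) * (bb - real m) * (bb - real k)"
      unfolding C_def by (simp add: algebra_simps)
    have "0 \<le> (X - bb) * C" using False C0 unfolding X_def by simp
    moreover have "0 \<le> (bb - real k + 1) * (bb - real m) * (bb - real k)" using bbk mk by simp
    ultimately have ineq: "(bb - real k + 1) * (X - real m) * (real k + 1) \<le> (X - real k + 1) * ((bb + 1) * (bb - real m))"
      using ident by linarith
    have "(real k + 1) * P \<le> (real k + 1) * ((bb - real k + 1) * (X - real m) / ((bb + 1) * (bb - real m)))"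
      using key2 unfolding X_def by (intro mult_left_mono) auto
    also have "\<dots> \<le> X - real k + 1"
      using ineq den by (simp add: divide_simps mult.commute mult.left_commute)
    finally show ?thesis using False b0 unfolding X_def bb_def by (intro exI[of _ b0]) auto
  qed
qed



lemma cheb:
  fixes f :: "nat \<Rightarrow> real" and k :: nat
  assumes up: "\<And>i j. i \<le> j \<Longrightarrow> j < k \<Longrightarrow> f i \<le> f j"
  shows "0 \<le> (\<Sum>i<k. (2 * real i - (real k - 1)) * f i)"
proof -
  define S where "S = (\<Sum>i<k. (2 * real i - (real k - 1)) * f i)"
  have "S = (\<Sum>i\<in>{0..<k}. (2 * real i - (real k - 1)) * f i)"
    unfolding S_def by (simp add: atLeast0LessThan)
  also have "\<dots> = (\<Sum>i\<in>{0..<k}. (2 * real (k - Suc i) - (real k - 1)) * f (k - Suc i))"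
    by (subst sum.atLeastLessThan_rev) simp
  also have "\<dots> = (\<Sum>i<k. ((real k - 1) - 2 * real i) * f (k - Suc i))"
    by (intro sum.cong) (auto simp: of_nat_diff algebra_simps)
  finally have S2: "S = (\<Sum>i<k. ((real k - 1) - 2 * real i) * f (k - Suc i))" .
  have "2 * S = (\<Sum>i<k. (2 * real i - (real k - 1)) * (f i - f (k - Suc i)))"
    unfolding mult_2 apply (subst (1) S_def) apply (subst S2)
    by (simp add: sum.distrib[symmetric] algebra_simps)
  also have "0 \<le> \<dots>"
  proof (rule sum_nonneg)
    fix i assume i: "i \<in> {..<k}"
    show "0 \<le> (2 * real i - (real k - 1)) * (f i - f (k - Suc i))"
    proof (cases "k - Suc i \<le> i")
      case True
      then have "f (k - Suc i) \<le> f i" using up i by auto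
      moreover have "0 \<le> 2 * real i - (real k - 1)" using True i by (simp add: of_nat_diff)
      ultimately show ?thesis by simp
    next
      case False
      then have "f i \<le> f (k - Suc i)" using up i by auto
      moreover have "2 * real i - (real k - 1) \<le> 0" using False i by (simp add: of_nat_diff)
      ultimately show ?thesis by (simp add: mult_nonpos_nonpos)
    qed
  qed
  finally show ?thesis unfolding S_def by simp
qed

lemma split_sum:
  fixes g :: "nat \<Rightarrow> real"
  assumes "k \<le> B"
  shows "(\<Sum>i\<le>B. g i) = (\<Sum>i<k. g i) + (\<Sum>i\<in>{k..B}. g i)"
proof -
  have "{..B} = {..<k} \<union> {k..B}" using assms by auto
  moreover have "{..<k} \<inter> {k..B} = {}" by auto
  ultimately show ?thesis using sum.union_disjoint[of "{..<k}" "{k..B}" g] by simp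
qed

lemma markov:
  fixes f :: "nat \<Rightarrow> real"
  assumes f0: "\<And>i. i \<le> B \<Longrightarrow> 0 \<le> f i" and kB: "k \<le> B"
  shows "real k * (\<Sum>i\<in>{k..B}. f i) \<le> (\<Sum>i\<le>B. real i * f i)"
proof -
  have "real k * (\<Sum>i\<in>{k..B}. f i) = (\<Sum>i\<in>{k..B}. real k * f i)" by (simp add: sum_distrib_left)
  also have "\<dots> \<le> (\<Sum>i\<in>{k..B}. real i * f i)"
    using f0 by (intro sum_mono mult_right_mono) auto
  also have "\<dots> \<le> (\<Sum>i<k. real i * f i) + (\<Sum>i\<in>{k..B}. real i * f i)"
  proof -
    have "0 \<le> (\<Sum>i<k. real i * f i)" using f0 kB by (intro sum_nonneg mult_nonneg_nonneg) auto
    then show ?thesis by simp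
  qed
  also have "\<dots> = (\<Sum>i\<le>B. real i * f i)" using split_sum[OF kB] by simp
  finally show ?thesis .
qed

lemma caseA:
  fixes f :: "nat \<Rightarrow> real"
  assumes f0: "\<And>i. i \<le> B \<Longrightarrow> 0 \<le> f i" and s1: "(\<Sum>i\<le>B. f i) = 1" and kB: "k \<le> B"
    and up: "\<And>i j. i \<le> j \<Longrightarrow> j < k \<Longrightarrow> f i \<le> f j"
  shows "(real k + 1) * (\<Sum>i\<in>{k..B}. f i) \<le> 2 * (\<Sum>i\<le>B. real i * f i) - real k + 1"
proof -
  define P where "P = (\<Sum>i\<in>{k..B}. f i)"
  define Q where "Q = (\<Sum>i<k. f i)"
  have PQ: "Q + P = 1" using split_sum[OF kB, of f] s1 unfolding P_def Q_def by simp
  have c: "0 \<le> (\<Sum>i<k. (2 * real i - (real k - 1)) * f i)" using cheb up by blast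
  have c2: "(\<Sum>i<k. (2 * real i - (real k - 1)) * f i) = 2 * (\<Sum>i<k. real i * f i) - (real k - 1) * Q"
    unfolding Q_def by (simp add: left_diff_distrib sum_subtractf sum_distrib_left mult.assoc)
  have t: "real k * P \<le> (\<Sum>i\<in>{k..B}. real i * f i)"
  proof -
    have "real k * P = (\<Sum>i\<in>{k..B}. real k * f i)" unfolding P_def by (simp add: sum_distrib_left)
    also have "\<dots> \<le> (\<Sum>i\<in>{k..B}. real i * f i)"
      using f0 by (intro sum_mono mult_right_mono) auto
    finally show ?thesis .
  qed
  have "(\<Sum>i\<le>B. real i * f i) = (\<Sum>i<k. real i * f i) + (\<Sum>i\<in>{k..B}. real i * f i)"
    using split_sum[OF kB] by simp
  moreover have e: "(real k - 1) * Q = real k - 1 - real k * P + P"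
  proof -
    have Qe: "Q = 1 - P" using PQ by simp
    show ?thesis unfolding Qe by (simp add: algebra_simps)
  qed
  moreover have "(real k + 1) * P = real k * P + P" by (simp add: algebra_simps)
  ultimately show ?thesis using c c2 t unfolding P_def[symmetric] by linarith
qed



lemma two_eta_le:
  fixes \<eta> \<beta> :: real
  assumes e0: "0 < \<eta>" and e1: "\<eta> \<le> 1" and b0: "0 < \<beta>" and b1: "\<beta> \<le> 1"
    and d: "0 < -2*(\<eta> - 1/2)*(6*\<eta> + 1) + (2 - 4*\<eta>)*\<beta> + (4*\<eta> - 1)^2*\<beta>^2"
  shows "2 * \<eta> \<le> 1 + \<beta>"
proof (rule ccontr)
  assume neg: "\<not> 2 * \<eta> \<le> 1 + \<beta>"
  define w where "w = 2*\<eta> - 1 - \<beta>"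
  have w0: "0 < w" using neg unfolding w_def by simp
  have w1: "w \<le> 1 - \<beta>" using e1 unfolding w_def by simp
  have ident: "-2*(\<eta> - 1/2)*(6*\<eta> + 1) + (2 - 4*\<eta>)*\<beta> + (4*\<eta> - 1)^2*\<beta>^2
      = w^2 - 4 * (1 - \<beta>) * ((w + 1 + \<beta>) * (1 + \<beta>) * (w + \<beta>))"
    unfolding w_def by (simp add: algebra_simps power2_eq_square)
  have p1: "w \<le> (w + 1 + \<beta>) * (1 + \<beta>) * (w + \<beta>)"
  proof -
    have "1 * 1 \<le> (w + 1 + \<beta>) * (1 + \<beta>)"
      using w0 b0 by (intro mult_mono) auto
    moreover have "w \<le> w + \<beta>" using b0 by simp
    ultimately have "1 * w \<le> ((w + 1 + \<beta>) * (1 + \<beta>)) * (w + \<beta>)"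
      using w0 by (intro mult_mono) auto
    then show ?thesis by simp
  qed
  have "4 * (1 - \<beta>) * w \<le> 4 * (1 - \<beta>) * ((w + 1 + \<beta>) * (1 + \<beta>) * (w + \<beta>))"
    using p1 b1 by (intro mult_left_mono) auto
  moreover have "w * w \<le> (1 - \<beta>) * w" using w1 w0 by (intro mult_right_mono) auto
  moreover have "0 \<le> (1 - \<beta>) * w" using w0 b1 by simp
  ultimately have "w^2 \<le> 4 * (1 - \<beta>) * ((w + 1 + \<beta>) * (1 + \<beta>) * (w + \<beta>))"
    unfolding power2_eq_square by (simp add: algebra_simps)
  then show False using d ident by linarith
qed

lemma quad_identity:
  fixes \<eta> t \<beta> d :: real
  assumes e0: "0 < \<eta>" and b0: "0 < \<beta>" and t0: "0 \<le> t"
    and dd: "d = -2*(\<eta> - 1/2)*(6*\<eta> + 1) + (2 - 4*\<eta>)*\<beta> + (4*\<eta> - 1)^2*\<beta>^2"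
  defines "V \<equiv> 1/2 + \<beta> + (1 + \<beta>) / (4 * \<eta>)"
  shows "(2*\<eta> - t + \<beta>) / (t + \<beta>) - 2*\<eta>*(1 - t + \<beta>) / (1 + \<beta>)
       = (2*\<eta>*(V - (t + \<beta>))^2 - d / (8*\<eta>)) / ((t + \<beta>) * (1 + \<beta>))"
proof -
  have tb: "0 < t + \<beta>" using t0 b0 by simp
  have b1: "0 < 1 + \<beta>" using b0 by simp
  have "2*\<eta>*(V - (t + \<beta>))^2 - d / (8*\<eta>)
      = 2*\<eta>*(t+\<beta>)^2 - (2*\<eta>*(1+2*\<beta>) + 1 + \<beta>)*(t+\<beta>) + (2*\<eta>+2*\<beta>)*(1+\<beta>)"
    unfolding V_def dd using e0 by (simp add: field_simps power2_eq_square)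
  moreover have "(2*\<eta> - t + \<beta>) / (t + \<beta>) - 2*\<eta>*(1 - t + \<beta>) / (1 + \<beta>)
      = (2*\<eta>*(t+\<beta>)^2 - (2*\<eta>*(1+2*\<beta>) + 1 + \<beta>)*(t+\<beta>) + (2*\<eta>+2*\<beta>)*(1+\<beta>)) / ((t + \<beta>) * (1 + \<beta>))"
    using tb b1 by (simp add: field_simps power2_eq_square)
  ultimately show ?thesis by simp
qed


lemma quad_cases:
  fixes \<eta> t \<beta> d :: real
  assumes e0: "0 < \<eta>" and e1: "\<eta> \<le> 1" and b0: "0 < \<beta>" and b1: "\<beta> \<le> 1" and t0: "0 \<le> t"
    and dd: "d = -2*(\<eta> - 1/2)*(6*\<eta> + 1) + (2 - 4*\<eta>)*\<beta> + (4*\<eta> - 1)^2*\<beta>^2"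
  defines "c \<equiv> 1/2 + 1/(4*\<eta>) * (1 + \<beta> - sqrt d)"
  defines "B1 \<equiv> (2*\<eta> - t + \<beta>) / (t + \<beta>)" and "B3 \<equiv> 2*\<eta>*(1 - t + \<beta>) / (1 + \<beta>)"
  shows "(0 < d \<and> t \<le> c \<longrightarrow> B3 \<le> B1) \<and> (0 < d \<and> c < t \<and> t \<le> 1 \<longrightarrow> B1 \<le> B3)
     \<and> (d \<le> 0 \<longrightarrow> B3 \<le> B1)"
proof -
  define V where "V = 1/2 + \<beta> + (1 + \<beta>) / (4 * \<eta>)"
  define z where "z = V - (t + \<beta>)"
  define Q where "Q = 2*\<eta>*z^2 - d / (8*\<eta>)"
  have den: "0 < (t + \<beta>) * (1 + \<beta>)" using t0 b0 by simp
  have diff: "B1 - B3 = Q / ((t + \<beta>) * (1 + \<beta>))"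
    unfolding B1_def B3_def Q_def z_def V_def
    using quad_identity[OF e0 b0 t0 dd] by simp
  have Qsign: "0 \<le> Q \<longleftrightarrow> d \<le> 16*\<eta>^2*z^2"
  proof -
    have "Q = (16*\<eta>^2*z^2 - d) / (8*\<eta>)" unfolding Q_def using e0 by (simp add: field_simps power2_eq_square)
    then show ?thesis using e0 by (simp add: divide_nonneg_pos le_divide_eq)
  qed
  have Qsign2: "Q \<le> 0 \<longleftrightarrow> 16*\<eta>^2*z^2 \<le> d"
  proof -
    have "Q = (16*\<eta>^2*z^2 - d) / (8*\<eta>)" unfolding Q_def using e0 by (simp add: field_simps power2_eq_square)
    then show ?thesis using e0 by (simp add: divide_le_0_iff)
  qed
  have pos_case: "B3 \<le> B1" if "0 \<le> Q"
  proof -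
    have "0 \<le> Q / ((t + \<beta>) * (1 + \<beta>))" using that den by (simp add: divide_nonneg_pos)
    then show ?thesis using diff by simp
  qed
  have neg_case: "B1 \<le> B3" if "Q \<le> 0"
  proof -
    have "Q / ((t + \<beta>) * (1 + \<beta>)) \<le> 0" using that den by (simp add: divide_nonpos_pos)
    then show ?thesis using diff by simp
  qed
  define s where "s = sqrt d / (4*\<eta>)"
  have zc: "z = c - t + s" unfolding z_def V_def c_def s_def using e0 by (simp add: field_simps)
  have s2: "16*\<eta>^2*s^2 = d" if "0 \<le> d"
    unfolding s_def using e0 that by (simp add: power_divide power2_eq_square field_simps)
  have s0: "0 \<le> s" if "0 \<le> d" unfolding s_def using e0 that by simp
  have A: "B3 \<le> B1" if "0 < d" "t \<le> c"
  proof -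
    have "s \<le> z" using zc that by simp
    then have "s^2 \<le> z^2" using s0 that by (simp add: power_mono)
    then have "16*\<eta>^2*s^2 \<le> 16*\<eta>^2*z^2" by (intro mult_left_mono) auto
    then show ?thesis using s2 that Qsign pos_case by simp
  qed
  have Bc: "B1 \<le> B3" if "0 < d" "c < t" "t \<le> 1"
  proof -
    have "2 * \<eta> \<le> 1 + \<beta>" using two_eta_le[OF e0 e1 b0 b1] that dd by simp
    then have "1 + \<beta> \<le> V" unfolding V_def using e0 by (simp add: field_simps)
    then have z0: "0 \<le> z" unfolding z_def using that by simp
    have "z < s" using zc that by simp
    then have "z^2 \<le> s^2" using z0 by (simp add: power_mono)
    then have "16*\<eta>^2*z^2 \<le> 16*\<eta>^2*s^2" by (intro mult_left_mono) auto
    then show ?thesis using s2 that Qsign2 neg_case by simp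
  qed
  have C: "B3 \<le> B1" if "d \<le> 0"
  proof -
    have "0 \<le> 16*\<eta>^2*z^2" by simp
    then show ?thesis using that Qsign pos_case by linarith
  qed
  show ?thesis using A Bc C by blast
qed



lemma R0_b2:
  fixes b k :: nat
  assumes "1 \<le> k" "k \<le> b"
  shows "2*(real b - real k + 1)*(2*real k - 1) \<le> real b * (real b + 1)"
proof -
  have id: "real b * (real b + 1) - 2*(real b - real k + 1)*(2*real k - 1)
      = (real b - 2*real k + 1) * (real b - 2*real k + 2)"
    by (simp add: algebra_simps)
  have "0 \<le> (real b - 2*real k + 1) * (real b - 2*real k + 2)"
  proof (cases "b + 2 \<le> 2 * k")
    case True
    then have "real b - 2*real k + 2 \<le> 0" by linarith
    moreover have "real b - 2*real k + 1 \<le> 0" using True by linarith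
    ultimately show ?thesis by (simp add: mult_nonpos_nonpos)
  next
    case False
    then have "2 * k \<le> b + 1" by simp
    then have "0 \<le> real b - 2*real k + 1" by linarith
    moreover have "0 \<le> real b - 2*real k + 2" using False by linarith
    ultimately show ?thesis by simp
  qed
  then show ?thesis using id by linarith
qed

lemma R0_b3:
  fixes b k B :: nat
  assumes "k \<le> b" "b \<le> B" "B < 2 * k"
  shows "(real b - real k + 1) * (real B * (real B + 1)) \<le> (real B - real k + 1) * (real b * (real b + 1))"
proof -
  define G where "G = real b * (real b + 1) - (real b - real k + 1) * (real B + real b + 1)"
  have id: "(real B - real k + 1) * (real b * (real b + 1)) - (real b - real k + 1) * (real B * (real B + 1))
      = (real B - real b) * G" unfolding G_def by (simp add: algebra_simps)
  have "0 \<le> (real B - real b) * G"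
  proof (cases "b = B")
    case True then show ?thesis by simp
  next
    case False
    then have bB: "b + 1 \<le> B" using assms by simp
    have "(real b - real k + 1) * (real B + real b + 1) \<le> (real b - real k + 1) * (2 * real k + real b)"
      using assms by (intro mult_left_mono) auto
    moreover have "real b * (real b + 1) - (real b - real k + 1) * (2 * real k + real b) = real k * (2 * real k - 2 - real b)"
      by (simp add: algebra_simps)
    moreover have "0 \<le> real k * (2 * real k - 2 - real b)" using bB assms by simp
    ultimately have "0 \<le> G" unfolding G_def by linarith
    then show ?thesis using assms by simp
  qed
  then show ?thesis using id by linarith
qed

lemma b2_le_b1:
  fixes K M :: real
  assumes "1 \<le> K" "2*K - 1 \<le> 3*M"
  shows "M / (2*K - 1) \<le> (2*M - K + 1) / (K + 1)"
proof -
  have "M * (K + 1) \<le> (2*M - K + 1) * (2*K - 1)"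
  proof -
    have "(2*M - K + 1) * (2*K - 1) - M * (K + 1) = (K - 1) * (3*M - 2*K + 1)" by (simp add: algebra_simps)
    moreover have "0 \<le> (K - 1) * (3*M - 2*K + 1)" using assms by simp
    ultimately show ?thesis by linarith
  qed
  then show ?thesis using assms by (simp add: divide_simps)
qed

lemma b1_le_b2:
  fixes K M :: real
  assumes "1 \<le> K" "3*M \<le> 2*K - 1"
  shows "(2*M - K + 1) / (K + 1) \<le> M / (2*K - 1)"
proof -
  have "(2*M - K + 1) * (2*K - 1) \<le> M * (K + 1)"
  proof -
    have "(2*M - K + 1) * (2*K - 1) - M * (K + 1) = (K - 1) * (3*M - 2*K + 1)" by (simp add: algebra_simps)
    moreover have "(K - 1) * (3*M - 2*K + 1) \<le> 0" using assms by (simp add: mult_nonneg_nonpos)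
    ultimately show ?thesis by linarith
  qed
  then show ?thesis using assms by (simp add: divide_simps)
qed

lemma b1_le_b3:
  fixes K N M :: real
  assumes K1: "1 \<le> K" and KN: "K \<le> N" and NK: "N + 1 \<le> 2*K" and M0: "0 \<le> M" and MN: "3*M \<le> N"
  shows "(2*M - K + 1) / (K + 1) \<le> 2*M*(N - K + 1) / (N*(N + 1))"
proof -
  define c0 where "c0 = N*(N+1) - (N-K+1)*(K+1)"
  have c0pos: "0 \<le> c0"
  proof -
    have "c0 = N*(N-K) + (K*K - 1)" unfolding c0_def by (simp add: algebra_simps)
    moreover have "0 \<le> N*(N-K)" using KN K1 by simp
    moreover have "1 * 1 \<le> K*K" using K1 by (intro mult_mono) auto
    ultimately show ?thesis by linarith
  qed
  have N0: "0 < N" using K1 KN by simp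
  have "(2*M - K + 1) * (N*(N+1)) \<le> 2*M*(N - K + 1) * (K + 1)"
  proof -
    have id: "(2*M - K + 1) * (N*(N+1)) - 2*M*(N - K + 1) * (K + 1) = 2*M*c0 - (K-1)*N*(N+1)"
      unfolding c0_def by (simp add: algebra_simps)
    have "2*M*c0 \<le> (2*N/3)*c0" using MN c0pos by (intro mult_right_mono) auto
    moreover have "(2*N/3)*c0 - (K-1)*N*(N+1) = (N/3) * ((2*K - N - 1) * (K - 2*N - 1))"
      unfolding c0_def by (simp add: field_simps)
    moreover have "(2*K - N - 1) * (K - 2*N - 1) \<le> 0" using NK KN N0 by (simp add: mult_nonneg_nonpos)
    moreover have "(N/3) * ((2*K - N - 1) * (K - 2*N - 1)) \<le> 0"
      using calculation(3) N0 by (simp add: mult_nonneg_nonpos)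
    ultimately show ?thesis using id by linarith
  qed
  then show ?thesis using N0 K1 by (simp add: divide_simps)
qed


theorem theorem3:
  fixes B k :: nat and f :: "nat \<Rightarrow> real"
  assumes B: "B \<ge> 1"
    and pmf: "is_pmf_on_grid B f"
    and uni: "unimodal_grid B f"
    and k: "k \<le> B"
  defines "t \<equiv> real k / real B"
    and "\<eta> \<equiv> grid_mean B f"
    and "P \<equiv> grid_tail B f k"
    and "d \<equiv> - 2 * (grid_mean B f - 1/2) * (6 * grid_mean B f + 1)
              + (2 - 4 * grid_mean B f) / real B
              + (4 * grid_mean B f - 1)^2 / (real B)^2"
  shows
    "(\<eta> \<le> 1/3 \<longrightarrow>
        (\<eta> < t \<and> t \<le> min (3/2 * \<eta> + 1 / (2 * real B)) (2 * \<eta>)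
           \<longrightarrow> P \<le> (2 * \<eta> - t + 1 / real B) / (t + 1 / real B))
      \<and> (min (3/2 * \<eta> + 1 / (2 * real B)) (2 * \<eta>) < t \<and> t \<le> 1/2
           \<longrightarrow> P \<le> \<eta> / (2 * t - 1 / real B))
      \<and> (1/2 < t \<and> t \<le> 1
           \<longrightarrow> P \<le> 2 * \<eta> * (1 - t + 1 / real B) / (1 + 1 / real B)))
   \<and> (\<eta> > 1/3 \<and> d > 0 \<longrightarrow>
        (\<eta> < t \<and> t \<le> 1/2 + 1 / (4 * \<eta>) * (1 + 1 / real B - sqrt d)
           \<longrightarrow> P \<le> (2 * \<eta> - t + 1 / real B) / (t + 1 / real B))
      \<and> (1/2 + 1 / (4 * \<eta>) * (1 + 1 / real B - sqrt d) < t \<and> t \<le> 1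
           \<longrightarrow> P \<le> 2 * \<eta> * (1 - t + 1 / real B) / (1 + 1 / real B)))
   \<and> (\<eta> > 1/3 \<and> d \<le> 0 \<longrightarrow>
        P \<le> (2 * \<eta> - t + 1 / real B) / (t + 1 / real B))"
proof -
  have f0: "\<And>i. i \<le> B \<Longrightarrow> 0 \<le> f i" and s1: "(\<Sum>i\<le>B. f i) = 1"
    using pmf unfolding is_pmf_on_grid_def by auto
  obtain m where mB: "m \<le> B" and up: "\<forall>i j. i \<le> j \<and> j \<le> m \<longrightarrow> f i \<le> f j"
      and down: "\<forall>i j. m \<le> i \<and> i \<le> j \<and> j \<le> B \<longrightarrow> f j \<le> f i"
    using uni unfolding unimodal_grid_def by auto
  define M where "M = (\<Sum>i\<le>B. real i * f i)"
  define N where "N = real B"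
  define K where "K = real k"
  define \<beta> where "\<beta> = 1 / real B"
  have N1: "1 \<le> N" using B unfolding N_def by simp
  have N0: "0 < N" using N1 by simp
  have KN: "K \<le> N" using k unfolding K_def N_def by simp
  have K0: "0 \<le> K" unfolding K_def by simp
  have etaM: "\<eta> = M / N"
    unfolding \<eta>_def grid_mean_def M_def N_def by (simp add: sum_divide_distrib)
  have Pd: "P = (\<Sum>i\<in>{k..B}. f i)" unfolding P_def grid_tail_def by simp
  have P0: "0 \<le> P" unfolding Pd using f0 by (intro sum_nonneg) auto
  have P1: "P \<le> 1"
  proof -
    have "0 \<le> (\<Sum>i<k. f i)" using f0 k by (intro sum_nonneg) auto
    then show ?thesis using split_sum[OF k, of f] s1 unfolding Pd by simp
  qed
  have M0: "0 \<le> M" unfolding M_def using f0 by (intro sum_nonneg mult_nonneg_nonneg) auto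
  have MN: "M \<le> N"
  proof -
    have "M \<le> (\<Sum>i\<le>B. real B * f i)" unfolding M_def using f0 by (intro sum_mono mult_right_mono) auto
    also have "\<dots> = N" using s1 unfolding N_def by (simp add: sum_distrib_left[symmetric])
    finally show ?thesis .
  qed
  have mk: "K * P \<le> M" using markov[OF f0 k] unfolding K_def Pd M_def by simp
  have AB: "(K + 1) * P \<le> 2*M - K + 1 \<or>
      (2 \<le> k \<and> (2*K - 1) * P \<le> M \<and> (B < 2*k \<longrightarrow> N*(N+1)*P \<le> 2*M*(N - K + 1)))"
  proof (cases "k \<le> m + 1")
    case True
    have "(real k + 1) * (\<Sum>i\<in>{k..B}. f i) \<le> 2 * (\<Sum>i\<le>B. real i * f i) - real k + 1"
      apply (rule caseA[OF f0 s1 k]) using up True by auto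
    then show ?thesis unfolding K_def Pd M_def by simp
  next
    case False
    then have mk2: "m + 2 \<le> k" by simp
    obtain b where bk: "k \<le> b" and bB: "b \<le> B" and
      cs: "(2 * M \<le> real b \<and> P \<le> 2 * M * (real b - real k + 1) / (real b * (real b + 1)))
      \<or> (real b \<le> 2 * M \<and> (real k + 1) * P \<le> 2 * M - real k + 1)"
      using caseB[OF f0 s1 mB mk2 k up down] unfolding M_def Pd by blast
    show ?thesis
    proof (cases "real b \<le> 2 * M \<and> (real k + 1) * P \<le> 2 * M - real k + 1")
      case True then show ?thesis unfolding K_def by simp
    next
      case False
      then have R0: "P \<le> 2 * M * (real b - real k + 1) / (real b * (real b + 1))" using cs by auto
      have k2: "2 \<le> k" using mk2 by simp
      have bpos: "0 < real b * (real b + 1)" using bk k2 by simp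
      have y0: "0 \<le> real b - real k + 1" using bk by simp
      have c1: "(2*K - 1) * P \<le> M"
      proof -
        have "(2*K - 1) * P \<le> (2*K - 1) * (2 * M * (real b - real k + 1) / (real b * (real b + 1)))"
          using R0 k2 unfolding K_def by (intro mult_left_mono) auto
        also have "\<dots> = M * (2*(real b - real k + 1)*(2*real k - 1)) / (real b * (real b + 1))"
          unfolding K_def by (simp add: algebra_simps)
        also have "\<dots> \<le> M * (real b * (real b + 1)) / (real b * (real b + 1))"
          using R0_b2[of k b] k2 bk M0 bpos by (intro divide_right_mono mult_left_mono) auto
        also have "\<dots> = M" using bpos bk k2 by simp
        finally show ?thesis .
      qed
      have c2: "N*(N+1)*P \<le> 2*M*(N - K + 1)" if "B < 2*k"
      proof -
        have "N*(N+1)*P \<le> N*(N+1) * (2 * M * (real b - real k + 1) / (real b * (real b + 1)))"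
          using R0 N0 by (intro mult_left_mono) auto
        also have "\<dots> = 2 * M * ((real b - real k + 1) * (N*(N+1))) / (real b * (real b + 1))"
          by (simp add: algebra_simps)
        also have "\<dots> \<le> 2 * M * ((N - K + 1) * (real b * (real b + 1))) / (real b * (real b + 1))"
          using R0_b3[of k b B] that bk bB M0 bpos unfolding N_def K_def
          by (intro divide_right_mono mult_left_mono) auto
        also have "\<dots> = 2*M*(N - K + 1)" using bpos bk k2 by simp
        finally show ?thesis .
      qed
      show ?thesis using c1 c2 k2 by blast
    qed
  qed
  have tK: "t = K / N" unfolding t_def K_def N_def by simp
  have bN: "1 / real B = 1 / N" unfolding N_def by simp
  have dd_lem: "(a / N) / (b / N) = a / b" for a b using N0 by (cases "b = 0") (simp_all add: field_simps)
  have cv1: "(2 * \<eta> - t + 1 / real B) / (t + 1 / real B) = (2*M - K + 1) / (K + 1)"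
  proof -
    have "2 * \<eta> - t + 1 / real B = (2*M - K + 1) / N" unfolding etaM tK bN using N0 by (simp add: field_simps)
    moreover have "t + 1 / real B = (K + 1) / N" unfolding tK bN by (simp add: add_divide_distrib)
    ultimately show ?thesis using dd_lem[of "2*M - K + 1" "K + 1"] by simp
  qed
  have cv2: "\<eta> / (2 * t - 1 / real B) = M / (2*K - 1)"
  proof -
    have "2 * t - 1 / real B = (2*K - 1) / N" unfolding tK bN using N0 by (simp add: field_simps)
    then show ?thesis unfolding etaM using dd_lem[of M "2*K - 1"] by simp
  qed
  have cv3: "2 * \<eta> * (1 - t + 1 / real B) / (1 + 1 / real B) = 2*M*(N - K + 1) / (N*(N+1))"
  proof -
    have e1: "2 * \<eta> * (1 - t + 1 / real B) = 2*M*(N - K + 1) / (N*N)" unfolding etaM tK bN using N0 by (simp add: field_simps)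
    have e2: "1 + 1 / real B = (N + 1) / N" unfolding bN using N0 by (simp add: field_simps)
    have nz: "N \<noteq> 0" "N + 1 \<noteq> 0" using N0 by auto
    have "(2*M*(N - K + 1) / (N*N)) / ((N + 1) / N) = 2*M*(N - K + 1) / (N*(N+1))"
      using N0 by (simp add: divide_simps)
    then show ?thesis by (simp only: e1 e2)
  qed
  have toB1: "P \<le> (2*M - K + 1) / (K + 1)" if "(K + 1) * P \<le> 2*M - K + 1"
  proof -
    have pos: "0 < K + 1" using K0 by simp
    show ?thesis by (subst pos_le_divide_eq[OF pos]) (use that in \<open>simp add: mult.commute\<close>)
  qed
  have toB3: "P \<le> 2*M*(N - K + 1) / (N*(N+1))" if "N*(N+1)*P \<le> 2*M*(N - K + 1)"
  proof -
    have pos: "0 < N*(N+1)" using N0 by simp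
    show ?thesis by (subst pos_le_divide_eq[OF pos]) (use that in \<open>simp add: mult.commute\<close>)
  qed
  have eta13: "\<eta> \<le> 1/3 \<longleftrightarrow> 3*M \<le> N" unfolding etaM using N0 by (simp add: field_simps)
  have part1: "\<eta> \<le> 1/3 \<longrightarrow>
        (\<eta> < t \<and> t \<le> min (3/2 * \<eta> + 1 / (2 * real B)) (2 * \<eta>)
           \<longrightarrow> P \<le> (2 * \<eta> - t + 1 / real B) / (t + 1 / real B))
      \<and> (min (3/2 * \<eta> + 1 / (2 * real B)) (2 * \<eta>) < t \<and> t \<le> 1/2
           \<longrightarrow> P \<le> \<eta> / (2 * t - 1 / real B))
      \<and> (1/2 < t \<and> t \<le> 1
           \<longrightarrow> P \<le> 2 * \<eta> * (1 - t + 1 / real B) / (1 + 1 / real B))"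
  proof (intro impI conjI)
    assume "\<eta> \<le> 1/3"
    then have M3: "3*M \<le> N" using eta13 by simp
    have ca: "t \<le> 3/2 * \<eta> + 1 / (2 * real B) \<longleftrightarrow> 2*K \<le> 3*M + 1"
      unfolding tK etaM N_def[symmetric] using N0 by (simp add: field_simps)
    have cb: "t \<le> 2 * \<eta> \<longleftrightarrow> K \<le> 2*M"
      unfolding tK etaM using N0 by (simp add: field_simps)
    have ct: "t \<le> 1/2 \<longleftrightarrow> 2*K \<le> N" unfolding tK using N0 by (simp add: field_simps)
    have ct1: "1/2 < t \<longleftrightarrow> N < 2*K" unfolding tK using N0 by (simp add: field_simps)
    {
      assume H: "\<eta> < t \<and> t \<le> min (3/2 * \<eta> + 1 / (2 * real B)) (2 * \<eta>)"
      then have h1: "2*K \<le> 3*M + 1" and h2: "K \<le> 2*M"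
        using ca cb by auto
      have "P \<le> (2*M - K + 1) / (K + 1)"
      proof (cases "(K + 1) * P \<le> 2*M - K + 1")
        case True then show ?thesis using toB1 by simp
      next
        case False
        then have "(2*K - 1) * P \<le> M" and k2: "2 \<le> k" using AB by auto
        then have "P \<le> M / (2*K - 1)" using k2 unfolding K_def by (simp add: field_simps)
        also have "\<dots> \<le> (2*M - K + 1) / (K + 1)" using b2_le_b1[of K M] h1 k2 unfolding K_def by simp
        finally show ?thesis .
      qed
      then show "P \<le> (2 * \<eta> - t + 1 / real B) / (t + 1 / real B)" using cv1 by simp
    }
    {
      assume H: "min (3/2 * \<eta> + 1 / (2 * real B)) (2 * \<eta>) < t \<and> t \<le> 1/2"
      then have h1: "(3*M + 1) < 2*K \<or> 2*M < K" and h2: "2*K \<le> N"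
        using ca cb ct by (auto simp: not_le[symmetric] min_less_iff_disj)
      have K1: "1 \<le> K"
      proof -
        have "0 < K" using h1 M0 by auto
        then show ?thesis unfolding K_def by simp
      qed
      have "P \<le> M / (2*K - 1)"
      proof (cases "(K + 1) * P \<le> 2*M - K + 1")
        case True
        show ?thesis
        proof (cases "3*M \<le> 2*K - 1")
          case True2: True
          have "P \<le> (2*M - K + 1) / (K + 1)" using toB1 True by simp
          also have "\<dots> \<le> M / (2*K - 1)" using b1_le_b2[OF K1 True2] .
          finally show ?thesis .
        next
          case False
          then have "2*M < K" using h1 by auto
          then have "K < 2" using False by linarith
          then have "K = 1" using K1 unfolding K_def by simp
          then show ?thesis using mk by simp
        qed
      next
        case False
        then have "(2*K - 1) * P \<le> M" and k2: "2 \<le> k" using AB by auto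
        then show "P \<le> M / (2*K - 1)" using k2 unfolding K_def by (simp add: field_simps)
      qed
      then show "P \<le> \<eta> / (2 * t - 1 / real B)" using cv2 by simp
    }
    {
      assume H: "1/2 < t \<and> t \<le> 1"
      then have h1: "N < 2*K" using ct1 by auto
      then have Bk: "B < 2*k" unfolding N_def K_def by simp
      then have NK: "N + 1 \<le> 2*K" unfolding N_def K_def by simp
      have K1: "1 \<le> K" using h1 N1 unfolding K_def by simp
      have "P \<le> 2*M*(N - K + 1) / (N*(N+1))"
      proof (cases "(K + 1) * P \<le> 2*M - K + 1")
        case True
        have "P \<le> (2*M - K + 1) / (K + 1)" using toB1 True by simp
        also have "\<dots> \<le> 2*M*(N - K + 1) / (N*(N + 1))" using b1_le_b3[OF K1 KN NK M0 M3] .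
        finally show ?thesis .
      next
        case False
        then show ?thesis using AB Bk toB3 by auto
      qed
      then show "P \<le> 2 * \<eta> * (1 - t + 1 / real B) / (1 + 1 / real B)" using cv3 by simp
    }
  qed
  have H2: "P \<le> (2*M - K + 1) / (K + 1) \<or> (N < 2*K \<and> P \<le> 2*M*(N - K + 1) / (N*(N+1)))"
    if M3: "N < 3*M"
  proof (cases "(K + 1) * P \<le> 2*M - K + 1")
    case True then show ?thesis using toB1 by simp
  next
    case False
    then have c1: "(2*K - 1) * P \<le> M" and k2: "2 \<le> k"
       and c2: "B < 2*k \<longrightarrow> N*(N+1)*P \<le> 2*M*(N - K + 1)" using AB by auto
    show ?thesis
    proof (cases "B < 2*k")
      case True then show ?thesis using c2 toB3 unfolding N_def K_def by simp
    next
      case False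
      then have "2*K \<le> N" unfolding N_def K_def by simp
      have "P \<le> M / (2*K - 1)" using c1 k2 unfolding K_def by (simp add: field_simps)
      also have "\<dots> \<le> (2*M - K + 1) / (K + 1)"
        using b2_le_b1[of K M] k2 \<open>2*K \<le> N\<close> M3 unfolding K_def by simp
      finally show ?thesis by simp
    qed
  qed
  have dd: "d = -2*(\<eta> - 1/2)*(6*\<eta> + 1) + (2 - 4*\<eta>)*\<beta> + (4*\<eta> - 1)^2*\<beta>^2"
    unfolding d_def \<eta>_def \<beta>_def by (simp add: power_divide field_simps)
  have part23: "(\<eta> > 1/3 \<and> d > 0 \<longrightarrow>
        (\<eta> < t \<and> t \<le> 1/2 + 1 / (4 * \<eta>) * (1 + 1 / real B - sqrt d)
           \<longrightarrow> P \<le> (2 * \<eta> - t + 1 / real B) / (t + 1 / real B))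
      \<and> (1/2 + 1 / (4 * \<eta>) * (1 + 1 / real B - sqrt d) < t \<and> t \<le> 1
           \<longrightarrow> P \<le> 2 * \<eta> * (1 - t + 1 / real B) / (1 + 1 / real B)))
   \<and> (\<eta> > 1/3 \<and> d \<le> 0 \<longrightarrow>
        P \<le> (2 * \<eta> - t + 1 / real B) / (t + 1 / real B))"
  proof -
    {
      assume e3: "\<eta> > 1/3"
      then have M3: "N < 3*M" using eta13 by simp
      have e0: "0 < \<eta>" using e3 by simp
      have e1: "\<eta> \<le> 1" unfolding etaM using MN N0 by simp
      have b0: "0 < \<beta>" unfolding \<beta>_def using B by simp
      have b1: "\<beta> \<le> 1" unfolding \<beta>_def using B by simp
      have t0: "0 \<le> t" unfolding t_def by simp
      note Q = quad_cases[OF e0 e1 b0 b1 t0 dd]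
      note Q' = Q[unfolded \<beta>_def]
      have H2': "P \<le> (2 * \<eta> - t + 1 / real B) / (t + 1 / real B)
           \<or> P \<le> 2 * \<eta> * (1 - t + 1 / real B) / (1 + 1 / real B)"
        using H2[OF M3] unfolding cv1 cv3 by auto
      have "(d > 0 \<longrightarrow>
        (\<eta> < t \<and> t \<le> 1/2 + 1 / (4 * \<eta>) * (1 + 1 / real B - sqrt d)
           \<longrightarrow> P \<le> (2 * \<eta> - t + 1 / real B) / (t + 1 / real B))
      \<and> (1/2 + 1 / (4 * \<eta>) * (1 + 1 / real B - sqrt d) < t \<and> t \<le> 1
           \<longrightarrow> P \<le> 2 * \<eta> * (1 - t + 1 / real B) / (1 + 1 / real B)))
       \<and> (d \<le> 0 \<longrightarrow> P \<le> (2 * \<eta> - t + 1 / real B) / (t + 1 / real B))"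
        using H2' Q' by (smt (verit))
    }
    then show ?thesis by blast
  qed
  show ?thesis using part1 part23 by blast
qed

end
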